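(* In the setting described in the context, for each $\hat{i}\in I$ let $t_{\hat{i}}$ be the optimal value and $\alpha^{(\hat{i})}$ an optimal solution of \[ \min_{\alpha}\ \sum_{j\in J}a_{\hat{i}j}\hat{x}_j-\sum_{j\in J_{\hat{i}}}\alpha_{\hat{i}j}|\hat{x}_j|-b_{\hat{i}} \] subject to $\sum_{j\in J}a_{ij}\hat{x}_j-\sum_{j\in J_i}\alpha_{ij}|\hat{x}_j|\ge b_i$ for all $i\in I$, $\alpha\in\Omega$, $\alpha\ge0$. Let $i^*\in\arg\min_{\hat{i}\in I}t_{\hat{i}}$ and $\alpha^*=\alpha^{(i^* )}$. Then the optimal value of RLO-IU-DG is $t_{i^*}$, and there exists an optimal solution of RLO-IU-DG with $\alpha_i=\alpha^*_i$ for all $i\in I$, $c=\bar{a}_{i^*}(\alpha^*_{i^*},\hat{x})$, and $\pi=e_{i^*}$. Moreover, if for every $i\in I$ either $b_i>0$ or $a_{ij}\neq0$ for some $j\in J\setminus J_i$, then this solution satisfies $c\neq0$ and $\bar{a}_i(\alpha_i,x)\neq0$ for all $i\in I$ and all $x\in\mathbb{R}^n$.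
   Context: Let $I=\{1,\dots,m\}$, $J=\{1,\dots,n\}$. Given are $a_{ij}\in\mathbb{R}$ ($i\in I,j\in J$), $b\in\mathbb{R}^m$, nonempty index sets $J_i\subseteq J$ ($i\in I$), an observed point $\hat{x}\in\mathbb{R}^n$, and a convex set $\Omega$ of collections $\alpha=(\alpha_{ij})_{j\in J_i,i\in I}$; $\alpha_i$ denotes $(\alpha_{ij})_{j\in J_i}$. Let $\mathrm{sgn}(t)=1$ if $t\ge0$ and $-1$ otherwise, and $e_i$ the $i$-th unit vector of $\mathbb{R}^m$. For $\alpha_i\ge0$ and $x\in\mathbb{R}^n$, $\bar{a}_i(\alpha_i,x)\in\mathbb{R}^n$ has components $\bar{a}_{ij}(\alpha_i,x)=a_{ij}-\mathrm{sgn}(x_j)\alpha_{ij}$ if $j\in J_i$ and $\bar{a}_{ij}(\alpha_i,x)=a_{ij}$ if $j\in J\setminus J_i$. The problem RLO-IU-DG is \[ \min_{\alpha,c,u,\pi,\lambda,\mu}\ \sum_{j\in J}c_j\hat{x}_j-\sum_{i\in I}b_i\pi_i \] subject to: $\alpha\in\Omega$; $\alpha_{ij}\hat{x}_j+u_{ij}\ge0$ and $-\alpha_{ij}\hat{x}_j+u_{ij}\ge0$ for all $j\in J_i,i\in I$; $\sum_{j\in J}a_{ij}\hat{x}_j-\sum_{j\in J_i}u_{ij}\ge b_i$ for all $i\in I$; $\alpha_{ij}\ge0$ for all $j\in J_i,i\in I$; $\sum_{i\in I}\pi_i=1$; $\sum_{i\in I}a_{ij}\pi_i+\sum_{i\in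 I:j\in J_i}\alpha_{ij}(\lambda_{ij}-\mu_{ij})=c_j$ for all $j\in J$; $\pi_i=\lambda_{ij}+\mu_{ij}$ for all $j\in J_i,i\in I$; $\pi_i,\lambda_{ij},\mu_{ij}\ge0$ for all $j\in J_i,i\in I$. Here $c\in\mathbb{R}^n$, $\pi\in\mathbb{R}^m$, and $u_{ij},\lambda_{ij},\mu_{ij}$ are real variables indexed by $j\in J_i,i\in I$. *)

theory Defs
  imports Complex_Main
begin

text \<open>Index sets I and J are the (finite, nonempty) universes of type variables 'i and 'j.
Collections indexed by j in J_i, i in I are represented as functions 'i => 'j => real that
vanish outside J_i.\<close>

definition coll :: "('i \<Rightarrow> 'j set) \<Rightarrow> ('i \<Rightarrow> 'j \<Rightarrow> real) set" where
  "coll Js = {f. \<forall>i j. j \<notin> Js i \<longrightarrow> f i j = 0}"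

definition convex_coll :: "('i \<Rightarrow> 'j \<Rightarrow> real) set \<Rightarrow> bool" where
  "convex_coll \<Omega> \<longleftrightarrow> (\<forall>x\<in>\<Omega>. \<forall>y\<in>\<Omega>. \<forall>t::real. 0 \<le> t \<and> t \<le> 1 \<longrightarrow>
      (\<lambda>i j. t * x i j + (1 - t) * y i j) \<in> \<Omega>)"

definition sgnp :: "real \<Rightarrow> real" where
  "sgnp t = (if t \<ge> 0 then 1 else -1)"

definition unitv :: "'i \<Rightarrow> 'i \<Rightarrow> real" where
  "unitv i = (\<lambda>k. if k = i then 1 else 0)"

definition abar :: "('i \<Rightarrow> 'j \<Rightarrow> real) \<Rightarrow> ('i \<Rightarrow> 'j set) \<Rightarrow> ('i \<Rightarrow> 'j \<Rightarrow> real)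
    \<Rightarrow> 'i \<Rightarrow> ('j \<Rightarrow> real) \<Rightarrow> 'j \<Rightarrow> real" where
  "abar a Js \<alpha> i x = (\<lambda>j. if j \<in> Js i then a i j - sgnp (x j) * \<alpha> i j else a i j)"

definition rlo_feasible ::
  "('i::finite \<Rightarrow> 'j::finite \<Rightarrow> real) \<Rightarrow> ('i \<Rightarrow> real) \<Rightarrow> ('i \<Rightarrow> 'j set)
   \<Rightarrow> ('i \<Rightarrow> 'j \<Rightarrow> real) set \<Rightarrow> ('j \<Rightarrow> real)
   \<Rightarrow> ('i \<Rightarrow> 'j \<Rightarrow> real) \<Rightarrow> ('j \<Rightarrow> real) \<Rightarrow> ('i \<Rightarrow> 'j \<Rightarrow> real) \<Rightarrow> ('i \<Rightarrow> real)
   \<Rightarrow> ('i \<Rightarrow> 'j \<Rightarrow> real) \<Rightarrow> ('i \<Rightarrow> 'j \<Rightarrow> real) \<Rightarrow> bool" where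
  "rlo_feasible a b Js \<Omega> xh \<alpha> c u \<pi> lam \<mu> \<longleftrightarrow>
     \<alpha> \<in> \<Omega> \<and> \<alpha> \<in> coll Js \<and> u \<in> coll Js \<and> lam \<in> coll Js \<and> \<mu> \<in> coll Js \<and>
     (\<forall>i. \<forall>j\<in>Js i. \<alpha> i j * xh j + u i j \<ge> 0 \<and> - \<alpha> i j * xh j + u i j \<ge> 0) \<and>
     (\<forall>i. (\<Sum>j\<in>UNIV. a i j * xh j) - (\<Sum>j\<in>Js i. u i j) \<ge> b i) \<and>
     (\<forall>i. \<forall>j\<in>Js i. \<alpha> i j \<ge> 0) \<and>
     (\<Sum>i\<in>UNIV. \<pi> i) = 1 \<and>
     (\<forall>j. (\<Sum>i\<in>UNIV. a i j * \<pi> i) + (\<Sum>i\<in>{i. j \<in> Js i}. \<alpha> i j * (lam i j - \<mu> i j)) = c j) \<and>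
     (\<forall>i. \<forall>j\<in>Js i. \<pi> i = lam i j + \<mu> i j) \<and>
     (\<forall>i. \<pi> i \<ge> 0) \<and>
     (\<forall>i. \<forall>j\<in>Js i. lam i j \<ge> 0 \<and> \<mu> i j \<ge> 0)"

definition rlo_obj :: "('i::finite \<Rightarrow> real) \<Rightarrow> ('j::finite \<Rightarrow> real) \<Rightarrow> ('j \<Rightarrow> real)
    \<Rightarrow> ('i \<Rightarrow> real) \<Rightarrow> real" where
  "rlo_obj b xh c \<pi> = (\<Sum>j\<in>UNIV. c j * xh j) - (\<Sum>i\<in>UNIV. b i * \<pi> i)"

definition sub_feasible ::
  "('i::finite \<Rightarrow> 'j::finite \<Rightarrow> real) \<Rightarrow> ('i \<Rightarrow> real) \<Rightarrow> ('i \<Rightarrow> 'j set)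
   \<Rightarrow> ('i \<Rightarrow> 'j \<Rightarrow> real) set \<Rightarrow> ('j \<Rightarrow> real) \<Rightarrow> ('i \<Rightarrow> 'j \<Rightarrow> real) \<Rightarrow> bool" where
  "sub_feasible a b Js \<Omega> xh \<alpha> \<longleftrightarrow>
     \<alpha> \<in> \<Omega> \<and> \<alpha> \<in> coll Js \<and>
     (\<forall>i. (\<Sum>j\<in>UNIV. a i j * xh j) - (\<Sum>j\<in>Js i. \<alpha> i j * \<bar>xh j\<bar>) \<ge> b i) \<and>
     (\<forall>i. \<forall>j\<in>Js i. \<alpha> i j \<ge> 0)"

definition sub_obj ::
  "('i::finite \<Rightarrow> 'j::finite \<Rightarrow> real) \<Rightarrow> ('i \<Rightarrow> real) \<Rightarrow> ('i \<Rightarrow> 'j set)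
   \<Rightarrow> ('j \<Rightarrow> real) \<Rightarrow> 'i \<Rightarrow> ('i \<Rightarrow> 'j \<Rightarrow> real) \<Rightarrow> real" where
  "sub_obj a b Js xh ih \<alpha> =
     (\<Sum>j\<in>UNIV. a ih j * xh j) - (\<Sum>j\<in>Js ih. \<alpha> ih j * \<bar>xh j\<bar>) - b ih"

end

theory Submission
  imports Defs
begin

lemma sumJ:
  fixes f :: "'i \<Rightarrow> 'j::finite \<Rightarrow> real"
  assumes "f \<in> coll Js"
  shows "(\<Sum>j\<in>Js i. f i j * g j) = (\<Sum>j\<in>UNIV. f i j * g j)"
  using assms by (intro sum.mono_neutral_left) (auto simp: coll_def)

lemma sumI:
  fixes f :: "'i::finite \<Rightarrow> 'j \<Rightarrow> real"
  assumes "f \<in> coll Js"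
  shows "(\<Sum>i\<in>{i. j \<in> Js i}. f i j * g i) = (\<Sum>i\<in>UNIV. f i j * g i)"
  using assms by (intro sum.mono_neutral_left) (auto simp: coll_def)

lemma termwise:
  fixes al l m x :: real
  assumes "al \<ge> 0" "l \<ge> 0" "m \<ge> 0"
  shows "- ((l + m) * (al * \<bar>x\<bar>)) \<le> al * (l - m) * x"
proof (cases "x \<ge> 0")
  case True
  have "0 \<le> 2 * al * l * x" using assms True by simp
  then show ?thesis using True by (simp add: algebra_simps)
next
  case False
  have "0 \<le> al * m" using assms by simp
  then have "al * m * x \<le> 0" using False by (simp add: mult_nonneg_nonpos)
  then show ?thesis using False by (simp add: algebra_simps)
qed

lemma part1:
  fixes a :: "'i::finite \<Rightarrow> 'j::finite \<Rightarrow> real"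
  assumes F: "rlo_feasible a b Js \<Omega> xh \<alpha> c u \<pi> lam \<mu>"
    and tle: "\<And>\<alpha>' i. sub_feasible a b Js \<Omega> xh \<alpha>' \<Longrightarrow> ts \<le> sub_obj a b Js xh i \<alpha>'"
  shows "ts \<le> rlo_obj b xh c \<pi>"
proof -
  have acoll: "\<alpha> \<in> coll Js" and ucoll: "u \<in> coll Js" using F by (auto simp: rlo_feasible_def)
  have apos: "\<And>i j. \<alpha> i j \<ge> 0"
    using F acoll by (auto simp: rlo_feasible_def coll_def) (metis order_refl)
  have ub: "\<And>i j. j \<in> Js i \<Longrightarrow> \<alpha> i j * \<bar>xh j\<bar> \<le> u i j"
  proof -
    fix i j assume "j \<in> Js i"
    then have "\<alpha> i j * xh j + u i j \<ge> 0" "- \<alpha> i j * xh j + u i j \<ge> 0"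
      using F by (auto simp: rlo_feasible_def)
    moreover have "\<alpha> i j * \<bar>xh j\<bar> = \<bar>\<alpha> i j * xh j\<bar>" using apos[of i j] by (simp add: abs_mult)
    ultimately show "\<alpha> i j * \<bar>xh j\<bar> \<le> u i j" by linarith
  qed
  have SF: "sub_feasible a b Js \<Omega> xh \<alpha>"
    unfolding sub_feasible_def
  proof (intro conjI allI ballI)
    show "\<alpha> \<in> \<Omega>" "\<alpha> \<in> coll Js" using F by (auto simp: rlo_feasible_def)
    show "0 \<le> \<alpha> i j" for i j by (rule apos)
    fix i
    have "(\<Sum>j\<in>Js i. \<alpha> i j * \<bar>xh j\<bar>) \<le> (\<Sum>j\<in>Js i. u i j)" by (rule sum_mono) (rule ub)
    moreover have "(\<Sum>j\<in>UNIV. a i j * xh j) - (\<Sum>j\<in>Js i. u i j) \<ge> b i" using F by (auto simp: rlo_feasible_def)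
    ultimately show "b i \<le> (\<Sum>j\<in>UNIV. a i j * xh j) - (\<Sum>j\<in>Js i. \<alpha> i j * \<bar>xh j\<bar>)" by linarith
  qed
  have ceq: "c j = (\<Sum>i\<in>UNIV. a i j * \<pi> i) + (\<Sum>i\<in>UNIV. \<alpha> i j * (lam i j - \<mu> i j))" for j
  proof -
    have "(\<Sum>i\<in>UNIV. a i j * \<pi> i) + (\<Sum>i\<in>{i. j \<in> Js i}. \<alpha> i j * (lam i j - \<mu> i j)) = c j"
      using F by (auto simp: rlo_feasible_def)
    then show ?thesis using sumI[OF acoll, of j "\<lambda>i. lam i j - \<mu> i j"] by simp
  qed
  have "(\<Sum>j\<in>UNIV. c j * xh j) = (\<Sum>j\<in>UNIV. \<Sum>i\<in>UNIV. a i j * \<pi> i * xh j + \<alpha> i j * (lam i j - \<mu> i j) * xh j)"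
  proof (rule sum.cong[OF refl])
    fix j
    show "c j * xh j = (\<Sum>i\<in>UNIV. a i j * \<pi> i * xh j + \<alpha> i j * (lam i j - \<mu> i j) * xh j)"
      unfolding ceq distrib_right sum_distrib_right sum.distrib ..
  qed
  also have "\<dots> = (\<Sum>i\<in>UNIV. \<Sum>j\<in>UNIV. a i j * \<pi> i * xh j + \<alpha> i j * (lam i j - \<mu> i j) * xh j)"
    by (rule sum.swap)
  finally have cx: "(\<Sum>j\<in>UNIV. c j * xh j) = (\<Sum>i\<in>UNIV. \<Sum>j\<in>UNIV. a i j * \<pi> i * xh j + \<alpha> i j * (lam i j - \<mu> i j) * xh j)" .
  have key: "\<pi> i * ts \<le> (\<Sum>j\<in>UNIV. a i j * \<pi> i * xh j + \<alpha> i j * (lam i j - \<mu> i j) * xh j) - b i * \<pi> i" for i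
  proof -
    have pi0: "\<pi> i \<ge> 0" using F by (auto simp: rlo_feasible_def)
    have "\<pi> i * ts \<le> \<pi> i * sub_obj a b Js xh i \<alpha>" using tle[OF SF, of i] pi0 by (rule mult_left_mono)
    also have "\<dots> = \<pi> i * ((\<Sum>j\<in>UNIV. a i j * xh j) - (\<Sum>j\<in>UNIV. \<alpha> i j * \<bar>xh j\<bar>) - b i)"
      unfolding sub_obj_def using sumJ[OF acoll, of i "\<lambda>j. \<bar>xh j\<bar>"] by simp
    also have "\<dots> = (\<Sum>j\<in>UNIV. a i j * \<pi> i * xh j) + (\<Sum>j\<in>UNIV. - (\<pi> i * (\<alpha> i j * \<bar>xh j\<bar>))) - b i * \<pi> i"
      by (simp add: algebra_simps sum_distrib_left sum_negf)
    also have "\<dots> \<le> (\<Sum>j\<in>UNIV. a i j * \<pi> i * xh j) + (\<Sum>j\<in>UNIV. \<alpha> i j * (lam i j - \<mu> i j) * xh j) - b i * \<pi> i"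
    proof -
      have "(\<Sum>j\<in>UNIV. - (\<pi> i * (\<alpha> i j * \<bar>xh j\<bar>))) \<le> (\<Sum>j\<in>UNIV. \<alpha> i j * (lam i j - \<mu> i j) * xh j)"
      proof (rule sum_mono)
        fix j :: 'j
        show "- (\<pi> i * (\<alpha> i j * \<bar>xh j\<bar>)) \<le> \<alpha> i j * (lam i j - \<mu> i j) * xh j"
        proof (cases "j \<in> Js i")
          case True
          then have "\<pi> i = lam i j + \<mu> i j" "lam i j \<ge> 0" "\<mu> i j \<ge> 0" using F by (auto simp: rlo_feasible_def)
          then show ?thesis using termwise[OF apos[of i j], of "lam i j" "\<mu> i j" "xh j"] by simp
        next
          case False
          then have "\<alpha> i j = 0" using acoll by (auto simp: coll_def)
          then show ?thesis by simp
        qed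
      qed
      then show ?thesis by linarith
    qed
    also have "\<dots> = (\<Sum>j\<in>UNIV. a i j * \<pi> i * xh j + \<alpha> i j * (lam i j - \<mu> i j) * xh j) - b i * \<pi> i"
      by (simp add: sum.distrib)
    finally show ?thesis .
  qed
  have "ts = (\<Sum>i\<in>UNIV. \<pi> i * ts)" using F by (simp add: rlo_feasible_def sum_distrib_right[symmetric])
  also have "\<dots> \<le> (\<Sum>i\<in>UNIV. (\<Sum>j\<in>UNIV. a i j * \<pi> i * xh j + \<alpha> i j * (lam i j - \<mu> i j) * xh j) - b i * \<pi> i)"
    by (rule sum_mono) (rule key)
  also have "\<dots> = rlo_obj b xh c \<pi>"
    unfolding rlo_obj_def cx by (simp add: sum_subtractf)
  finally show ?thesis .
qed

theorem theorem3:
  fixes a :: "'i::finite \<Rightarrow> 'j::finite \<Rightarrow> real"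
    and b :: "'i \<Rightarrow> real"
    and Js :: "'i \<Rightarrow> 'j set"
    and \<Omega> :: "('i \<Rightarrow> 'j \<Rightarrow> real) set"
    and xh :: "'j \<Rightarrow> real"
    and \<alpha>opt :: "'i \<Rightarrow> 'i \<Rightarrow> 'j \<Rightarrow> real"
    and t :: "'i \<Rightarrow> real"
    and istar :: 'i
  assumes Js_ne: "\<forall>i. Js i \<noteq> {}"
    and \<Omega>_coll: "\<Omega> \<subseteq> coll Js"
    and \<Omega>_convex: "convex_coll \<Omega>"
    and opt_feas: "\<forall>ih. sub_feasible a b Js \<Omega> xh (\<alpha>opt ih)"
    and opt_min: "\<forall>ih \<alpha>. sub_feasible a b Js \<Omega> xh \<alpha> \<longrightarrow>
                     sub_obj a b Js xh ih (\<alpha>opt ih) \<le> sub_obj a b Js xh ih \<alpha>"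
    and t_def: "\<forall>ih. t ih = sub_obj a b Js xh ih (\<alpha>opt ih)"
    and istar_min: "\<forall>ih. t istar \<le> t ih"
  shows "(\<forall>\<alpha> c u \<pi> lam \<mu>. rlo_feasible a b Js \<Omega> xh \<alpha> c u \<pi> lam \<mu> \<longrightarrow> t istar \<le> rlo_obj b xh c \<pi>)
       \<and> (\<exists>u lam \<mu>.
            rlo_feasible a b Js \<Omega> xh (\<alpha>opt istar) (abar a Js (\<alpha>opt istar) istar xh) u (unitv istar) lam \<mu>
          \<and> rlo_obj b xh (abar a Js (\<alpha>opt istar) istar xh) (unitv istar) = t istar
          \<and> ((\<forall>i. b i > 0 \<or> (\<exists>j. j \<notin> Js i \<and> a i j \<noteq> 0)) \<longrightarrow>
               abar a Js (\<alpha>opt istar) istar xh \<noteq> (\<lambda>j. 0)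
             \<and> (\<forall>i x. abar a Js (\<alpha>opt istar) i x \<noteq> (\<lambda>j. 0))))"
proof -
  define A where "A = \<alpha>opt istar"
  define c where "c = abar a Js A istar xh"
  have SF: "sub_feasible a b Js \<Omega> xh A" using opt_feas A_def by simp
  have acoll: "A \<in> coll Js" using SF by (simp add: sub_feasible_def)
  have aoff: "\<And>i j. j \<notin> Js i \<Longrightarrow> A i j = 0" using acoll by (simp add: coll_def)
  have apos: "\<And>i j. A i j \<ge> 0"
    using SF aoff by (auto simp: sub_feasible_def) (metis order_refl)
  have P1: "\<forall>\<alpha> c u \<pi> lam \<mu>. rlo_feasible a b Js \<Omega> xh \<alpha> c u \<pi> lam \<mu> \<longrightarrow> t istar \<le> rlo_obj b xh c \<pi>"
  proof (intro allI impI)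
    fix \<alpha> c u \<pi> lam \<mu> assume F: "rlo_feasible a b Js \<Omega> xh \<alpha> c u \<pi> lam \<mu>"
    show "t istar \<le> rlo_obj b xh c \<pi>"
    proof (rule part1[OF F])
      fix \<alpha>' i assume "sub_feasible a b Js \<Omega> xh \<alpha>'"
      then have "t i \<le> sub_obj a b Js xh i \<alpha>'" using opt_min t_def by simp
      then show "t istar \<le> sub_obj a b Js xh i \<alpha>'" using istar_min order_trans by blast
    qed
  qed
  define u where "u = (\<lambda>i j. if j \<in> Js i then A i j * \<bar>xh j\<bar> else 0)"
  define lam where "lam = (\<lambda>i j. if i = istar \<and> j \<in> Js i \<and> xh j < 0 then 1 else (0::real))"
  define mu where "mu = (\<lambda>i j. if i = istar \<and> j \<in> Js i \<and> xh j \<ge> 0 then 1 else (0::real))"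
  have cj: "c j = (\<Sum>i\<in>UNIV. a i j * unitv istar i) + (\<Sum>i\<in>{i. j \<in> Js i}. A i j * (lam i j - mu i j))" for j
  proof -
    have "(\<Sum>i\<in>{i. j \<in> Js i}. A i j * (lam i j - mu i j)) = (\<Sum>i\<in>UNIV. A i j * (lam i j - mu i j))"
      by (rule sumI[OF acoll])
    also have "\<dots> = (\<Sum>i\<in>UNIV. if i = istar then A istar j * (lam istar j - mu istar j) else 0)"
      by (rule sum.cong) (auto simp: lam_def mu_def)
    also have "\<dots> = A istar j * (lam istar j - mu istar j)" by simp
    finally have e1: "(\<Sum>i\<in>{i. j \<in> Js i}. A i j * (lam i j - mu i j)) = A istar j * (lam istar j - mu istar j)" .
    have e2: "(\<Sum>i\<in>UNIV. a i j * unitv istar i) = a istar j"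
      by (simp add: unitv_def if_distrib cong: if_cong)
    show ?thesis unfolding e1 e2 c_def abar_def
      by (auto simp: lam_def mu_def sgnp_def aoff)
  qed
  have FE: "rlo_feasible a b Js \<Omega> xh A c u (unitv istar) lam mu"
    unfolding rlo_feasible_def
  proof (intro conjI allI ballI)
    show "A \<in> \<Omega>" using SF by (simp add: sub_feasible_def)
    show "A \<in> coll Js" by (rule acoll)
    show "u \<in> coll Js" "lam \<in> coll Js" "mu \<in> coll Js" by (auto simp: coll_def u_def lam_def mu_def)
    fix i
    show "0 \<le> A i j * xh j + u i j" "0 \<le> - A i j * xh j + u i j" if "j \<in> Js i" for j
    proof -
      have e: "A i j * \<bar>xh j\<bar> = \<bar>A i j * xh j\<bar>" using apos[of i j] by (simp add: abs_mult)
      have "u i j = \<bar>A i j * xh j\<bar>" using that e by (simp add: u_def)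
      then show "0 \<le> A i j * xh j + u i j" "0 \<le> - A i j * xh j + u i j" by linarith+
    qed
    show "0 \<le> A i j" for j by (rule apos)
    show "0 \<le> unitv istar i" by (simp add: unitv_def)
    show "unitv istar i = lam i j + mu i j" if "j \<in> Js i" for j
      using that by (auto simp: unitv_def lam_def mu_def)
    show "0 \<le> lam i j" "0 \<le> mu i j" for j by (auto simp: lam_def mu_def)
    have "(\<Sum>j\<in>Js i. u i j) = (\<Sum>j\<in>Js i. A i j * \<bar>xh j\<bar>)" by (simp add: u_def)
    then show "b i \<le> (\<Sum>j\<in>UNIV. a i j * xh j) - (\<Sum>j\<in>Js i. u i j)"
      using SF by (simp add: sub_feasible_def)
  next
    show "(\<Sum>i\<in>UNIV. unitv istar i) = 1" by (simp add: unitv_def)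
  next
    fix j show "(\<Sum>i\<in>UNIV. a i j * unitv istar i) + (\<Sum>i\<in>{i. j \<in> Js i}. A i j * (lam i j - mu i j)) = c j"
      using cj by simp
  qed
  have OBJ: "rlo_obj b xh c (unitv istar) = t istar"
  proof -
    have "c j * xh j = a istar j * xh j - A istar j * \<bar>xh j\<bar>" for j
      by (auto simp: c_def abar_def sgnp_def aoff algebra_simps)
    then have "(\<Sum>j\<in>UNIV. c j * xh j) = (\<Sum>j\<in>UNIV. a istar j * xh j) - (\<Sum>j\<in>UNIV. A istar j * \<bar>xh j\<bar>)"
      by (simp add: sum_subtractf)
    moreover have "(\<Sum>i\<in>UNIV. b i * unitv istar i) = b istar"
      by (simp add: unitv_def if_distrib cong: if_cong)
    ultimately show ?thesis
      unfolding rlo_obj_def t_def[rule_format] sub_obj_def A_def[symmetric]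
      using sumJ[OF acoll, of istar "\<lambda>j. \<bar>xh j\<bar>"] by simp
  qed
  have NZ: "abar a Js A i x \<noteq> (\<lambda>j. 0)" if H: "\<forall>i. b i > 0 \<or> (\<exists>j. j \<notin> Js i \<and> a i j \<noteq> 0)" for i x
  proof
    assume Z: "abar a Js A i x = (\<lambda>j. 0)"
    then have Zj: "abar a Js A i x j = 0" for j by simp
    have off: "a i j = 0" if "j \<notin> Js i" for j using Zj[of j] that by (simp add: abar_def)
    have on: "a i j = sgnp (x j) * A i j" if "j \<in> Js i" for j using Zj[of j] that by (simp add: abar_def)
    have le: "a i j * xh j \<le> A i j * \<bar>xh j\<bar>" for j
    proof (cases "j \<in> Js i")
      case True
      have "a i j * xh j \<le> \<bar>a i j * xh j\<bar>" by simp
      also have "\<dots> = A i j * \<bar>xh j\<bar>" using on[OF True] apos[of i j]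
        by (simp add: abs_mult sgnp_def)
      finally show ?thesis .
    next
      case False then show ?thesis using off aoff by simp
    qed
    have "(\<Sum>j\<in>UNIV. a i j * xh j) \<le> (\<Sum>j\<in>UNIV. A i j * \<bar>xh j\<bar>)" by (rule sum_mono) (rule le)
    moreover have "b i \<le> (\<Sum>j\<in>UNIV. a i j * xh j) - (\<Sum>j\<in>UNIV. A i j * \<bar>xh j\<bar>)"
      using SF sumJ[OF acoll, of i "\<lambda>j. \<bar>xh j\<bar>"] unfolding sub_feasible_def by metis
    ultimately have "b i \<le> 0" by linarith
    then show False using H off by force
  qed
  show ?thesis
    using P1 FE OBJ NZ unfolding A_def c_def by blast
qed

end
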